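(* Let $\beta>0$ and let $v_2,v_3$ satisfy (i$_2$)–(iii$_2$), (i$_3$)–(iv$_3$) for some $\varepsilon>0$. If $C_N$ is a minimizer of $\mathcal{F}_\beta$ with $N$ particles and $G_{\rm nat}$ is its natural bond graph, then $F_\beta(G_{\rm nat})\le m_\beta(N)$; equivalently $\mathcal{F}_\beta(C_N)\le -2N+\frac12 m_\beta(N)$.
   Context: Substrate $\mathcal{L}^-=\mathbb{Z}^2\cap\{x_2\le0\}$. Configuration of $N$ particles: $N$ distinct points of $\{x_2>0\}$. $\theta_{x,y,z}\in[0,2\pi)$: clockwise angle between $x-y$ and $z-y$. Potentials: (i$_2$) $\min v_2=v_2(1)=-1$, $v_2(r)>-1$ for $r\ne1$; (ii$_2$) there is $r_0\in(1,\sqrt2)$ with $v_2=0$ on $[r_0,\infty)$; (iii$_2$) $v_2>\varepsilon^{-1}$ on $[0,1-\varepsilon]$; (i$_3$) $v_3(\theta)=v_3(2\pi-\theta)$; (ii$_3$) $v_3(k\pi/2)=0$, $k=1,2,3$, $v_3>0$ elsewhere; (iii$_3$) $v_3(\theta)\ge4(\pi/10-\varepsilon)^{-1}|\theta-\pi|$ on $[\pi-\varepsilon,\pi+\varepsilon]$, equality only at $\pi$; (iv$_3$) outside the $\varepsilon$-neighbourhoods of $\pi/2,\pi,3\pi/2$, $v_3>\max\{1,2\beta\}\frac{4}{(1-\varepsilon)^2}(\sqrt2+\frac12)^2$. Energy $\mathcal{F}_\beta(C_N)=\frac12\sum_{x_i\ne x_j}v_2(|x_i-x_j|)+\beta\sum_{x_i\in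 C_N,z\in\mathcal{L}^-}v_2(|x_i-z|)+\frac12\sum_{(x,y,z)}v_3(\theta_{x,y,z})$, the last sum over triples of pairwise distinct points of $C_N\cup\mathcal{L}^-$ with $|x-y|,|y-z|<r_0$. Minimizer: minimal energy among configurations with $N$ particles. Natural bond graph $G_{\rm nat}=(C_N,E_{\rm nat})$, $E_{\rm nat}=\{\{x,y\}:x\ne y\in C_N,|x-y|\le r_0\}$. For a graph $(V,E)$: $\mathcal{N}(x,E)=\{y\in V:\{x,y\}\in E\}$, $\mathcal{N}_{\mathcal{L}^-}(x)=\{y\in\mathcal{L}^-:|x-y|\le r_0\}$, $F_{{\rm bond},\beta}=\sum_{x\in V}(4-\#\mathcal{N}(x,E)-2\beta\#\mathcal{N}_{\mathcal{L}^-}(x))$, $F_{{\rm ex},\beta}=\sum_{\{x,y\}\in E}(v_2(|x-y|)+1)+2\beta\sum_{x\in V,y\in\mathcal{N}_{\mathcal{L}^-}(x)}(v_2(|x-y|)+1)+\sum v_3(\theta_{x,y,z})$ (the last sum as in $\mathcal{F}_\beta$ for $G_{\rm nat}$), and $F_\beta=F_{{\rm bond},\beta}+F_{{\rm ex},\beta}$; for the natural bond graph $2\mathcal{F}_\beta(C_N)=-4N+F_\beta(G_{\rm nat})$. $m_\beta(N)=\min_{h\in\{1,\dots,N\}}(2h+2(1-\beta)\lceil N/h\rceil)$. *)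

theory Defs
  imports "HOL-Analysis.Analysis"
begin

text \<open>Points of the plane are complex numbers; the second coordinate x2 is Im x.\<close>

definition substrate :: "complex set" where
  "substrate = {z. Re z \<in> \<int> \<and> Im z \<in> \<int> \<and> Im z \<le> 0}"

text \<open>Clockwise angle between x - y and z - y, taken in [0, 2 pi).\<close>
definition theta :: "complex \<Rightarrow> complex \<Rightarrow> complex \<Rightarrow> real" where
  "theta x y z = (let a = Arg ((x - y) / (z - y)) in if a < 0 then a + 2 * pi else a)"

definition is_config :: "nat \<Rightarrow> complex set \<Rightarrow> bool" where
  "is_config N C \<longleftrightarrow> finite C \<and> card C = N \<and> (\<forall>x\<in>C. Im x > 0)"

definition triples :: "real \<Rightarrow> complex set \<Rightarrow> (complex \<times> complex \<times> complex) set" where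
  "triples r0 C = {(x, y, z). x \<in> C \<union> substrate \<and> y \<in> C \<union> substrate \<and> z \<in> C \<union> substrate
      \<and> x \<noteq> y \<and> y \<noteq> z \<and> x \<noteq> z \<and> dist x y < r0 \<and> dist y z < r0}"

definition three_body :: "(real \<Rightarrow> real) \<Rightarrow> real \<Rightarrow> complex set \<Rightarrow> real" where
  "three_body v3 r0 C = infsum (\<lambda>(x, y, z). v3 (theta x y z)) (triples r0 C)"

definition energy :: "(real \<Rightarrow> real) \<Rightarrow> (real \<Rightarrow> real) \<Rightarrow> real \<Rightarrow> real \<Rightarrow> complex set \<Rightarrow> real" where
  "energy v2 v3 r0 \<beta> C =
     1/2 * (\<Sum>x\<in>C. \<Sum>y\<in>C - {x}. v2 (dist x y))
     + \<beta> * infsum (\<lambda>(x, z). v2 (dist x z)) (C \<times> substrate)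
     + 1/2 * three_body v3 r0 C"

definition is_minimizer ::
  "(real \<Rightarrow> real) \<Rightarrow> (real \<Rightarrow> real) \<Rightarrow> real \<Rightarrow> real \<Rightarrow> nat \<Rightarrow> complex set \<Rightarrow> bool" where
  "is_minimizer v2 v3 r0 \<beta> N C \<longleftrightarrow> is_config N C \<and>
     (\<forall>C'. is_config N C' \<longrightarrow> energy v2 v3 r0 \<beta> C \<le> energy v2 v3 r0 \<beta> C')"

definition nbrs :: "complex set \<Rightarrow> complex set set \<Rightarrow> complex \<Rightarrow> complex set" where
  "nbrs V E x = {y\<in>V. {x, y} \<in> E}"

definition nbrs_sub :: "real \<Rightarrow> complex \<Rightarrow> complex set" where
  "nbrs_sub r0 x = {y\<in>substrate. dist x y \<le> r0}"

definition nat_edges :: "real \<Rightarrow> complex set \<Rightarrow> complex set set" where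
  "nat_edges r0 C = {{x, y} | x y. x \<in> C \<and> y \<in> C \<and> x \<noteq> y \<and> dist x y \<le> r0}"

definition F_bond :: "real \<Rightarrow> real \<Rightarrow> complex set \<Rightarrow> complex set set \<Rightarrow> real" where
  "F_bond r0 \<beta> V E =
     (\<Sum>x\<in>V. 4 - real (card (nbrs V E x)) - 2 * \<beta> * real (card (nbrs_sub r0 x)))"

text \<open>The bond sum is taken over ordered pairs (each bond counted from both endpoints),
  which is what makes the identity 2 energy = -4N + F hold.\<close>
definition F_ex ::
  "(real \<Rightarrow> real) \<Rightarrow> (real \<Rightarrow> real) \<Rightarrow> real \<Rightarrow> real \<Rightarrow> complex set \<Rightarrow> complex set set \<Rightarrow> real" where
  "F_ex v2 v3 r0 \<beta> V E =
     (\<Sum>x\<in>V. \<Sum>y\<in>nbrs V E x. v2 (dist x y) + 1)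
     + 2 * \<beta> * (\<Sum>x\<in>V. \<Sum>y\<in>nbrs_sub r0 x. v2 (dist x y) + 1)
     + three_body v3 r0 V"

definition F_graph ::
  "(real \<Rightarrow> real) \<Rightarrow> (real \<Rightarrow> real) \<Rightarrow> real \<Rightarrow> real \<Rightarrow> complex set \<Rightarrow> complex set set \<Rightarrow> real" where
  "F_graph v2 v3 r0 \<beta> V E = F_bond r0 \<beta> V E + F_ex v2 v3 r0 \<beta> V E"

definition m_beta :: "real \<Rightarrow> nat \<Rightarrow> real" where
  "m_beta \<beta> N = Min ((\<lambda>h. 2 * real h + 2 * (1 - \<beta>) * real (nat \<lceil>real N / real h\<rceil>)) ` {1..N})"

end

theory Submission
  imports Defs
begin


definition gi :: "complex \<Rightarrow> bool" where "gi z \<longleftrightarrow> Re z \<in> \<int> \<and> Im z \<in> \<int>"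

lemma int_sq_le1: "(a::int) * a + b * b \<le> 1 \<Longrightarrow> a \<in> {-1,0,1} \<and> b \<in> {-1,0,1}"
proof -
  assume h: "a * a + b * b \<le> 1"
  have "a * a \<ge> 0" "b * b \<ge> 0" by auto
  hence "a * a \<le> 1" "b * b \<le> 1" using h by linarith+
  hence "\<bar>a\<bar> \<le> 1" "\<bar>b\<bar> \<le> 1" by (metis abs_mult_self_eq not_le mult_le_cancel_left1 abs_ge_zero order_trans zero_less_one_class.zero_le_one less_le_not_le)+
  thus ?thesis by auto
qed

lemma gi_unit:
  assumes "gi u" "u \<noteq> 0" "norm u < sqrt 2"
  shows "u \<in> {1, -1, \<i>, -\<i>}"
proof -
  obtain a b :: int where ab: "Re u = of_int a" "Im u = of_int b"
    using assms(1) unfolding gi_def by (meson Ints_cases)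
  have "(norm u)^2 < (sqrt 2)^2" using assms(3) by (intro power_strict_mono) auto
  hence "(norm u)^2 < 2" by simp
  hence "real_of_int (a*a + b*b) < 2" using ab unfolding cmod_power2 by (simp add: power2_eq_square)
  hence s1: "a*a + b*b \<le> 1" by linarith
  hence "a \<in> {-1,0,1} \<and> b \<in> {-1,0,1}" by (rule int_sq_le1)
  moreover have "\<not> (a = 0 \<and> b = 0)" using assms(2) ab by (auto simp: complex_eq_iff)
  ultimately show ?thesis using ab s1 by (auto simp: complex_eq_iff)
qed



lemma gi_diff: "gi x \<Longrightarrow> gi y \<Longrightarrow> gi (x - y)"
  unfolding gi_def by auto

lemma gi_dist1:
  assumes "gi x" "gi y" "x \<noteq> y" "dist x y < sqrt 2"
  shows "dist x y = 1"
proof -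
  have "x - y \<in> {1, -1, \<i>, -\<i>}"
    using gi_unit[OF gi_diff[OF assms(1,2)]] assms(3,4) by (simp add: dist_norm)
  thus ?thesis by (auto simp: dist_norm)
qed

lemma gi_theta:
  assumes "gi x" "gi y" "gi z" "x \<noteq> y" "y \<noteq> z" "x \<noteq> z" "dist x y < sqrt 2" "dist y z < sqrt 2"
  shows "theta x y z \<in> {pi/2, pi, 3*pi/2}"
proof -
  have a: "x - y \<in> {1, -1, \<i>, -\<i>}"
    using gi_unit[OF gi_diff[OF assms(1,2)]] assms(4,7) by (simp add: dist_norm)
  have b: "z - y \<in> {1, -1, \<i>, -\<i>}"
    using gi_unit[OF gi_diff[OF assms(3,2)]] assms(5,8) by (simp add: dist_norm dist_commute norm_minus_commute)
  have ne: "x - y \<noteq> z - y" using assms(6) by auto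
  have am1: "Arg (-1) = pi" using Arg_of_real[of "-1"] by simp
  have "\<And>p q::complex. p \<in> {1, -1, \<i>, -\<i>} \<Longrightarrow> q \<in> {1, -1, \<i>, -\<i>} \<Longrightarrow> p \<noteq> q \<Longrightarrow> p / q \<in> {-1, \<i>, -\<i>}"
    by (auto simp: divide_complex_def complex_eq_iff)
  hence "(x - y) / (z - y) \<in> {-1, \<i>, -\<i>}"
    using a b ne by blast
  hence "Arg ((x - y) / (z - y)) \<in> {pi, pi/2, -pi/2}" using am1 by auto
  moreover have "\<And>A. A \<in> {pi, pi/2, -pi/2} \<Longrightarrow> (if A < 0 then A + 2*pi else A) \<in> {pi/2, pi, 3*pi/2}"
  proof -
    fix A :: real assume "A \<in> {pi, pi/2, -pi/2}"
    then consider "A = pi" | "A = pi/2" | "A = -pi/2" by blast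
    thus "(if A < 0 then A + 2*pi else A) \<in> {pi/2, pi, 3*pi/2}"
    proof cases
      case 1 thus ?thesis using pi_gt_zero by auto
    next
      case 2 have "\<not> A < 0" using pi_gt_zero unfolding 2 by linarith
      hence "(if A < 0 then A + 2*pi else A) = A" by (rule if_not_P)
      thus ?thesis unfolding 2 by simp
    next
      case 3 hence "A < 0" "A + 2 * pi = 3 * pi / 2" using pi_gt_zero by linarith+
      hence "(if A < 0 then A + 2*pi else A) = 3 * pi / 2" by simp
      thus ?thesis by simp
    qed
  qed
  ultimately show ?thesis unfolding theta_def Let_def by blast
qed

lemma gi_finite: "finite {z. gi z \<and> dist x z \<le> r}"
proof -
  let ?A = "{\<lfloor>Re x - r\<rfloor>..\<lceil>Re x + r\<rceil>} \<times> {\<lfloor>Im x - r\<rfloor>..\<lceil>Im x + r\<rceil>}"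
  have "{z. gi z \<and> dist x z \<le> r} \<subseteq> (\<lambda>(a,b). Complex (of_int a) (of_int b)) ` ?A"
  proof
    fix z assume "z \<in> {z. gi z \<and> dist x z \<le> r}"
    hence g: "gi z" and d: "dist x z \<le> r" by auto
    obtain a b :: int where ab: "Re z = of_int a" "Im z = of_int b"
      using g unfolding gi_def by (meson Ints_cases)
    have "\<bar>Re (x - z)\<bar> \<le> r" "\<bar>Im (x - z)\<bar> \<le> r"
      using d abs_Re_le_cmod[of "x - z"] abs_Im_le_cmod[of "x - z"] by (auto simp: dist_norm)
    hence "(a, b) \<in> ?A" using ab by (auto simp: floor_le_iff le_ceiling_iff) 
    moreover have "z = Complex (of_int a) (of_int b)" using ab by (simp add: complex_eq_iff)
    ultimately show "z \<in> (\<lambda>(a,b). Complex (of_int a) (of_int b)) ` ?A" by force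
  qed
  thus ?thesis by (rule finite_subset) auto
qed



lemma substrate_gi: "z \<in> substrate \<Longrightarrow> gi z"
  unfolding substrate_def gi_def by auto

lemma nbrs_sub_finite: "finite (nbrs_sub r0 x)"
proof -
  have "nbrs_sub r0 x \<subseteq> {z. gi z \<and> dist x z \<le> r0}"
    unfolding nbrs_sub_def using substrate_gi by auto
  thus ?thesis using gi_finite finite_subset by blast
qed

lemma nbrs_nat: "x \<in> C \<Longrightarrow> nbrs C (nat_edges r0 C) x = {y\<in>C. y \<noteq> x \<and> dist x y \<le> r0}"
  unfolding nbrs_def nat_edges_def
  by (auto simp: doubleton_eq_iff dist_commute)

lemma infsum_sub:
  assumes fin: "finite C" and v2z: "\<And>r. r \<ge> r0 \<Longrightarrow> v2 r = 0"
  shows "infsum (\<lambda>(x, z). v2 (dist x z)) (C \<times> substrate)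
         = (\<Sum>x\<in>C. \<Sum>z\<in>nbrs_sub r0 x. v2 (dist x z))"
proof -
  let ?T = "SIGMA x:C. nbrs_sub r0 x"
  have T: "?T \<subseteq> C \<times> substrate" unfolding nbrs_sub_def by auto
  have "infsum (\<lambda>(x, z). v2 (dist x z)) (C \<times> substrate) = infsum (\<lambda>(x, z). v2 (dist x z)) ?T"
  proof (rule infsum_cong_neutral)
    fix p assume "p \<in> C \<times> substrate - ?T"
    then show "(\<lambda>(x, z). v2 (dist x z)) p = 0" unfolding nbrs_sub_def
      by (auto intro!: v2z)
  qed (use T in auto)
  also have "\<dots> = (\<Sum>(x, z)\<in>?T. v2 (dist x z))"
    using fin nbrs_sub_finite by (intro infsum_finite) auto
  also have "\<dots> = (\<Sum>x\<in>C. \<Sum>z\<in>nbrs_sub r0 x. v2 (dist x z))"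
    using fin nbrs_sub_finite by (subst sum.Sigma) auto
  finally show ?thesis .
qed

lemma sum_plus1: "finite A \<Longrightarrow> (\<Sum>y\<in>A. (g y :: real) + 1) = (\<Sum>y\<in>A. g y) + real (card A)"
  by (simp add: sum.distrib)

lemma energy_identity:
  assumes fin: "finite C" and v2z: "\<And>r. r \<ge> r0 \<Longrightarrow> v2 r = 0"
  shows "F_graph v2 v3 r0 \<beta> C (nat_edges r0 C) = 4 * real (card C) + 2 * energy v2 v3 r0 \<beta> C"
proof -
  let ?nb = "nbrs C (nat_edges r0 C)"
  have finnb: "\<And>x. finite (?nb x)" unfolding nbrs_def using fin by auto
  have pair0: "\<And>x. x \<in> C \<Longrightarrow> (\<Sum>y\<in>C - {x}. v2 (dist x y)) = (\<Sum>y\<in>?nb x. v2 (dist x y))"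
  proof -
    fix x assume x: "x \<in> C"
    show "(\<Sum>y\<in>C - {x}. v2 (dist x y)) = (\<Sum>y\<in>?nb x. v2 (dist x y))"
      unfolding nbrs_nat[OF x] using fin
      by (intro sum.mono_neutral_right) (auto intro!: v2z)
  qed
  have pair: "(\<Sum>x\<in>C. \<Sum>y\<in>C - {x}. v2 (dist x y)) = (\<Sum>x\<in>C. \<Sum>y\<in>?nb x. v2 (dist x y))"
    using pair0 by (rule sum.cong[OF refl])
  have e1: "(\<Sum>x\<in>C. \<Sum>y\<in>?nb x. v2 (dist x y) + 1) = (\<Sum>x\<in>C. \<Sum>y\<in>?nb x. v2 (dist x y)) + (\<Sum>x\<in>C. real (card (?nb x)))"
    using finnb by (simp add: sum_plus1 sum.distrib)
  have e2: "(\<Sum>x\<in>C. \<Sum>y\<in>nbrs_sub r0 x. v2 (dist x y) + 1) = (\<Sum>x\<in>C. \<Sum>y\<in>nbrs_sub r0 x. v2 (dist x y)) + (\<Sum>x\<in>C. real (card (nbrs_sub r0 x)))"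
    using nbrs_sub_finite by (simp add: sum_plus1 sum.distrib)
  have e3: "(\<Sum>x\<in>C. 4 - real (card (?nb x)) - 2 * \<beta> * real (card (nbrs_sub r0 x)))
      = 4 * real (card C) - (\<Sum>x\<in>C. real (card (?nb x))) - 2 * \<beta> * (\<Sum>x\<in>C. real (card (nbrs_sub r0 x)))"
    by (simp add: sum_subtractf sum_distrib_left)
  have isub: "infsum (\<lambda>(x, z). v2 (dist x z)) (C \<times> substrate)
         = (\<Sum>x\<in>C. \<Sum>z\<in>nbrs_sub r0 x. v2 (dist x z))"
    using infsum_sub[OF fin, of r0 v2] v2z by blast
  show ?thesis
    unfolding F_graph_def F_bond_def F_ex_def energy_def
    using e1 e2 e3 pair isub
    by (simp only:) (simp add: ring_distribs)
qed



definition pt :: "nat \<Rightarrow> nat \<Rightarrow> complex" where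
  "pt h n = Complex (real (n div h)) (real (n mod h + 1))"

lemma pt_inj: "inj (pt h)"
proof
  fix a b assume "pt h a = pt h b"
  hence "a div h = b div h" "a mod h = b mod h" unfolding pt_def by (auto simp: complex_eq_iff)
  thus "a = b" by (metis div_mult_mod_eq)
qed

lemma pt_gi: "gi (pt h n)" unfolding pt_def gi_def by (simp add: Ints_of_nat)

lemma pt_Im: "Im (pt h n) = real (n mod h) + 1" unfolding pt_def by simp

lemma pt_up: "0 < h \<Longrightarrow> Suc n mod h \<noteq> 0 \<Longrightarrow> pt h (Suc n) = pt h n + \<i>"
  unfolding pt_def by (auto simp: complex_eq_iff div_Suc mod_Suc)

lemma pt_right: "0 < h \<Longrightarrow> pt h (n + h) = pt h n + 1"
  unfolding pt_def by (auto simp: complex_eq_iff)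

lemma v2_gi:
  assumes v21: "v2 1 = -1" and v2z: "\<And>r. r \<ge> r0 \<Longrightarrow> v2 r = 0" and r0: "r0 < sqrt 2"
    and "gi x" "gi y" "x \<noteq> y"
  shows "v2 (dist x y) = (if dist x y = 1 then -1 else 0)"
proof (cases "dist x y < sqrt 2")
  case True
  thus ?thesis using gi_dist1[OF assms(4-6)] v21 by simp
next
  case False
  hence "dist x y \<noteq> 1" by auto
  thus ?thesis using False r0 v2z by simp
qed

lemma nbrs_sub_gi:
  assumes r0: "r0 < sqrt 2" "1 \<le> r0" and x: "gi x" "Im x \<ge> 1"
  shows "nbrs_sub r0 x = (if Im x = 1 then {x - \<i>} else {})"
proof -
  have sub: "z = x - \<i> \<and> Im x = 1" if z: "z \<in> nbrs_sub r0 x" for z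
  proof -
    have zs: "z \<in> substrate" "dist x z \<le> r0" using z unfolding nbrs_sub_def by auto
    hence "Im z \<le> 0" unfolding substrate_def by auto
    hence ne: "x - z \<noteq> 0" using x by auto
    have "x - z \<in> {1, -1, \<i>, -\<i>}"
      using gi_unit[OF gi_diff[OF x(1) substrate_gi[OF zs(1)]] ne] zs r0 by (simp add: dist_norm)
    moreover have "Im (x - z) \<ge> 1" using x \<open>Im z \<le> 0\<close> by simp
    moreover have "\<forall>u\<in>{1, -1, \<i>, -\<i>}. Im u \<ge> 1 \<longrightarrow> u = \<i>" by auto
    ultimately have "x - z = \<i>" by blast
    hence "z = x - \<i>" by (simp add: algebra_simps)
    moreover have "Im x - Im z = 1" using arg_cong[OF \<open>x - z = \<i>\<close>, of Im] by simp
    hence "Im x = 1" using \<open>Im z \<le> 0\<close> x(2) by linarith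
    ultimately show ?thesis by simp
  qed
  have sup: "x - \<i> \<in> nbrs_sub r0 x" if "Im x = 1"
    using that x r0 unfolding nbrs_sub_def substrate_def gi_def by (auto simp: dist_norm)
  show ?thesis using sub sup by auto
qed



lemma card_mult:
  assumes h: "0 < h" and N: "1 \<le> N"
  shows "card {n\<in>{..<N}. h dvd n} = nat \<lceil>real N / real h\<rceil>"
proof -
  define q where "q = (N + h - 1) div h"
  have dm: "q * h + (N + h - 1) mod h = N + h - 1" unfolding q_def by (rule div_mult_mod_eq)
  have md: "(N + h - 1) mod h < h" using h by simp
  have q1: "N \<le> q * h" using dm md N by linarith
  have q2: "q * h < N + h" using dm md N by linarith
  have iff: "h * j < N \<longleftrightarrow> j < q" for j
  proof -
    have "j < q \<longleftrightarrow> Suc j \<le> q" by auto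
    also have "\<dots> \<longleftrightarrow> Suc j * h \<le> N + h - 1" unfolding q_def using h by (rule less_eq_div_iff_mult_less_eq)
    also have "\<dots> \<longleftrightarrow> h * j < N" using N by (auto simp: algebra_simps)
    finally show ?thesis by simp
  qed
  have set: "{n\<in>{..<N}. h dvd n} = (\<lambda>j. h * j) ` {..<q}"
  proof (rule set_eqI, rule iffI)
    fix n assume "n \<in> {n\<in>{..<N}. h dvd n}"
    then obtain j where "n = h * j" "h * j < N" by (auto elim!: dvdE)
    thus "n \<in> (\<lambda>j. h * j) ` {..<q}" using iff by blast
  next
    fix n assume "n \<in> (\<lambda>j. h * j) ` {..<q}"
    then obtain j where "n = h * j" "j < q" by blast
    thus "n \<in> {n\<in>{..<N}. h dvd n}" using iff by auto
  qed
  have cq: "card {n\<in>{..<N}. h dvd n} = q"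
    unfolding set using h by (subst card_image) (auto simp: inj_on_def)
  have "\<lceil>real N / real h\<rceil> = int q"
  proof (rule ceiling_unique)
    have "real q * real h < real N + real h" using q2 by (metis of_nat_add of_nat_less_iff of_nat_mult)
    hence "(real q - 1) * real h < real N" by (simp add: algebra_simps)
    thus "real_of_int (int q) - 1 < real N / real h" using h by (simp add: field_simps)
    have "real N \<le> real q * real h" using q1 by (metis of_nat_le_iff of_nat_mult)
    thus "real N / real h \<le> real_of_int (int q)" using h by (simp add: field_simps)
  qed
  thus ?thesis using cq by simp
qed

lemma card_split: "card {n\<in>{..<N::nat}. \<not> P n} + card {n\<in>{..<N}. P n} = N"
proof -
  have "card ({n\<in>{..<N::nat}. \<not> P n} \<union> {n\<in>{..<N}. P n}) = card {n\<in>{..<N::nat}. \<not> P n} + card {n\<in>{..<N}. P n}"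
    by (rule card_Un_disjoint) auto
  moreover have "{n\<in>{..<N::nat}. \<not> P n} \<union> {n\<in>{..<N}. P n} = {..<N}" by auto
  ultimately show ?thesis by simp
qed



lemma sum_if_neg1: "finite A \<Longrightarrow> (\<Sum>x\<in>A. if P x then -1 else 0 :: real) = - real (card {x\<in>A. P x})"
  by (simp add: sum.If_cases Int_def)

lemma disj_aux:
  assumes "P1 \<subseteq> A1" "P2 \<subseteq> A2" "P3 \<subseteq> A3" "P4 \<subseteq> A4"
    "A1 \<inter> A2 = {}" "A1 \<inter> A3 = {}" "A1 \<inter> A4 = {}" "A2 \<inter> A3 = {}" "A2 \<inter> A4 = {}" "A3 \<inter> A4 = {}"
  shows "P1 \<inter> P2 = {}" "(P1 \<union> P2) \<inter> P3 = {}" "(P1 \<union> P2 \<union> P3) \<inter> P4 = {}"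
  using assms by blast+

lemma competitor:
  fixes v2 v3 :: "real \<Rightarrow> real"
  assumes h: "0 < h" and N: "1 \<le> N"
    and v21: "v2 1 = -1" and v2z: "\<And>r. r \<ge> r0 \<Longrightarrow> v2 r = 0"
    and r0: "1 < r0" "r0 < sqrt 2"
    and v3z: "v3 (pi / 2) = 0" "v3 pi = 0" "v3 (3 * pi / 2) = 0"
  shows "\<exists>S. is_config N S \<and>
     energy v2 v3 r0 \<beta> S \<le> - 2 * real N + 1/2 * (2 * real h + 2 * (1 - \<beta>) * real (nat \<lceil>real N / real h\<rceil>))"
proof -
  define S where "S = pt h ` {..<N}"
  have finS: "finite S" unfolding S_def by simp
  have cardS: "card S = N" unfolding S_def by (rule card_image[OF inj_on_subset[OF pt_inj subset_UNIV], THEN trans]) simp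
  have giS: "\<And>x. x \<in> S \<Longrightarrow> gi x" unfolding S_def using pt_gi by auto
  have ImS: "\<And>x. x \<in> S \<Longrightarrow> Im x \<ge> 1" unfolding S_def using pt_Im by auto
  have conf: "is_config N S" unfolding is_config_def using finS cardS ImS by force
  have tb: "three_body v3 r0 S = 0"
    unfolding three_body_def
  proof (rule infsum_0)
    fix t assume t: "t \<in> triples r0 S"
    obtain x y z where xyz: "t = (x, y, z)" by (cases t) auto
    have g: "gi x" "gi y" "gi z" using t giS substrate_gi unfolding xyz triples_def by auto
    have "theta x y z \<in> {pi/2, pi, 3*pi/2}"
      using t r0 unfolding xyz triples_def by (intro gi_theta[OF g]) auto
    hence "v3 (theta x y z) = 0" using v3z by (metis empty_iff insertE)
    thus "(\<lambda>(x, y, z). v3 (theta x y z)) t = 0" unfolding xyz by simp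
  qed
  have sub1: "(\<Sum>z\<in>nbrs_sub r0 x. v2 (dist x z)) = (if Im x = 1 then -1 else 0)" if "x \<in> S" for x
  proof -
    have "nbrs_sub r0 x = (if Im x = 1 then {x - \<i>} else {})"
      using nbrs_sub_gi[of r0 x] r0 giS[OF that] ImS[OF that] by simp
    thus ?thesis using v21 by (simp add: dist_norm)
  qed
  have isub: "infsum (\<lambda>(x, z). v2 (dist x z)) (S \<times> substrate) = - real (card {x\<in>S. Im x = 1})"
  proof -
    have "infsum (\<lambda>(x, z). v2 (dist x z)) (S \<times> substrate) = (\<Sum>x\<in>S. \<Sum>z\<in>nbrs_sub r0 x. v2 (dist x z))"
      using infsum_sub[OF finS, of r0 v2] v2z by blast
    also have "\<dots> = (\<Sum>x\<in>S. if Im x = 1 then -1 else 0)" using sub1 by (rule sum.cong[OF refl])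
    also have "\<dots> = - real (card {x\<in>S. Im x = 1})" using finS by (rule sum_if_neg1)
    finally show ?thesis .
  qed
  define c where "c = card {n\<in>{..<N}. h dvd n}"
  have bottom: "{x\<in>S. Im x = 1} = pt h ` {n\<in>{..<N}. h dvd n}"
    unfolding S_def using pt_Im by (auto simp: dvd_eq_mod_eq_0)
  have cb: "card {x\<in>S. Im x = 1} = c"
    unfolding bottom c_def by (rule card_image[OF inj_on_subset[OF pt_inj subset_UNIV], THEN trans]) simp
  define Q where "Q = (SIGMA x:S. {y\<in>S. dist x y = 1})"
  have pair1: "(\<Sum>y\<in>S - {x}. v2 (dist x y)) = - real (card {y\<in>S. dist x y = 1})" if x: "x \<in> S" for x
  proof -
    have "(\<Sum>y\<in>S - {x}. v2 (dist x y)) = (\<Sum>y\<in>S - {x}. if dist x y = 1 then -1 else 0)"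
    proof (rule sum.cong[OF refl])
      fix y assume y: "y \<in> S - {x}"
      show "v2 (dist x y) = (if dist x y = 1 then -1 else 0)"
        by (rule v2_gi[of v2 r0]) (use v21 v2z r0 giS x y in auto)
    qed
    also have "\<dots> = - real (card {y\<in>S - {x}. dist x y = 1})" using finS by (intro sum_if_neg1) auto
    also have "{y\<in>S - {x}. dist x y = 1} = {y\<in>S. dist x y = 1}" by auto
    finally show ?thesis .
  qed
  have pairs: "(\<Sum>x\<in>S. \<Sum>y\<in>S - {x}. v2 (dist x y)) = - real (card Q)"
  proof -
    have "(\<Sum>x\<in>S. \<Sum>y\<in>S - {x}. v2 (dist x y)) = (\<Sum>x\<in>S. - real (card {y\<in>S. dist x y = 1}))"
      using pair1 by (rule sum.cong[OF refl])
    also have "\<dots> = - real (\<Sum>x\<in>S. card {y\<in>S. dist x y = 1})" by (simp add: sum_negf)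
    also have "(\<Sum>x\<in>S. card {y\<in>S. dist x y = 1}) = card Q" unfolding Q_def using finS by simp
    finally show ?thesis .
  qed
  define V where "V = {n. Suc n < N \<and> Suc n mod h \<noteq> 0}"
  define H where "H = {n. n + h < N}"
  define P1 where "P1 = (\<lambda>n. (pt h n, pt h (Suc n))) ` V"
  define P2 where "P2 = (\<lambda>n. (pt h (Suc n), pt h n)) ` V"
  define P3 where "P3 = (\<lambda>n. (pt h n, pt h (n + h))) ` H"
  define P4 where "P4 = (\<lambda>n. (pt h (n + h), pt h n)) ` H"
  have finV: "finite V" by (rule finite_subset[of _ "{..<N}"]) (auto simp: V_def)
  have finH: "finite H" by (rule finite_subset[of _ "{..<N}"]) (auto simp: H_def)
  have P1c: "P1 \<subseteq> {(a, b). b = a + \<i>}" using pt_up h by (auto simp: P1_def V_def)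
  have P2c: "P2 \<subseteq> {(a, b). a = b + \<i>}" using pt_up h by (auto simp: P2_def V_def)
  have P3c: "P3 \<subseteq> {(a, b). b = a + 1}" using pt_right h by (auto simp: P3_def)
  have P4c: "P4 \<subseteq> {(a, b). a = b + 1}" using pt_right h by (auto simp: P4_def)
  have D: "{(a, b). b = a + \<i>} \<inter> {(a, b). a = b + \<i>} = {}"
    "{(a, b). b = a + \<i>} \<inter> {(a, b). b = a + 1} = {}"
    "{(a, b). b = a + \<i>} \<inter> {(a, b). a = b + 1} = {}"
    "{(a, b). a = b + \<i>} \<inter> {(a, b). b = a + 1} = {}"
    "{(a, b). a = b + \<i>} \<inter> {(a, b). a = b + 1} = {}"
    "{(a, b). b = a + 1} \<inter> {(a, b::complex). a = b + 1} = {}"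
    by (auto simp: complex_eq_iff)
  note dd = disj_aux[OF P1c P2c P3c P4c D]
  have d12: "P1 \<inter> P2 = {}" by (rule dd(1))
  have d123: "(P1 \<union> P2) \<inter> P3 = {}" by (rule dd(2))
  have d1234: "(P1 \<union> P2 \<union> P3) \<inter> P4 = {}" by (rule dd(3))
  have finP: "finite P1" "finite P2" "finite P3" "finite P4"
    unfolding P1_def P2_def P3_def P4_def using finV finH by auto
  have injp: "\<And>a b. pt h a = pt h b \<Longrightarrow> a = b" using pt_inj by (meson injD)
  have c1: "card P1 = card V" unfolding P1_def by (rule card_image) (auto simp: inj_on_def dest: injp)
  have c2: "card P2 = card V" unfolding P2_def by (rule card_image) (auto simp: inj_on_def dest: injp)
  have c3: "card P3 = card H" unfolding P3_def by (rule card_image) (auto simp: inj_on_def dest: injp)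
  have c4: "card P4 = card H" unfolding P4_def by (rule card_image) (auto simp: inj_on_def dest: injp)
  have cU: "card (P1 \<union> P2 \<union> P3 \<union> P4) = card V + card V + card H + card H"
    using finP d12 d123 d1234 c1 c2 c3 c4 by (simp add: card_Un_disjoint)
  have d1: "dist a (a + \<i>) = 1" "dist (a + \<i>) a = 1" "dist a (a + 1) = 1" "dist (a + 1) a = 1" for a :: complex
    by (simp_all add: dist_norm)
  have inS: "\<And>n. n < N \<Longrightarrow> pt h n \<in> S" unfolding S_def by auto
  have PQ: "P1 \<union> P2 \<union> P3 \<union> P4 \<subseteq> Q"
  proof -
    have "P1 \<subseteq> Q"
    proof
      fix p assume "p \<in> P1"
      then obtain n where n: "Suc n < N" "Suc n mod h \<noteq> 0" and p: "p = (pt h n, pt h (Suc n))"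
        unfolding P1_def V_def by auto
      have "dist (pt h n) (pt h (Suc n)) = 1" using pt_up[OF h n(2)] d1 by simp
      thus "p \<in> Q" unfolding p Q_def using inS n by auto
    qed
    moreover have "P2 \<subseteq> Q"
    proof
      fix p assume "p \<in> P2"
      then obtain n where n: "Suc n < N" "Suc n mod h \<noteq> 0" and p: "p = (pt h (Suc n), pt h n)"
        unfolding P2_def V_def by auto
      have "dist (pt h (Suc n)) (pt h n) = 1" using pt_up[OF h n(2)] d1 by simp
      thus "p \<in> Q" unfolding p Q_def using inS n by auto
    qed
    moreover have "P3 \<subseteq> Q"
    proof
      fix p assume "p \<in> P3"
      then obtain n where n: "n + h < N" and p: "p = (pt h n, pt h (n + h))"
        unfolding P3_def H_def by auto
      have "dist (pt h n) (pt h (n + h)) = 1" using pt_right[OF h] d1 by simp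
      thus "p \<in> Q" unfolding p Q_def using inS n by auto
    qed
    moreover have "P4 \<subseteq> Q"
    proof
      fix p assume "p \<in> P4"
      then obtain n where n: "n + h < N" and p: "p = (pt h (n + h), pt h n)"
        unfolding P4_def H_def by auto
      have "dist (pt h (n + h)) (pt h n) = 1" using pt_right[OF h] d1 by simp
      thus "p \<in> Q" unfolding p Q_def using inS n by auto
    qed
    ultimately show ?thesis by blast
  qed
  have finQ: "finite Q" unfolding Q_def using finS by auto
  have cQ: "card V + card V + card H + card H \<le> card Q"
    using card_mono[OF finQ PQ] cU by simp
  have sucV: "Suc ` V = {m\<in>{..<N}. \<not> h dvd m}"
  proof (rule set_eqI, rule iffI)
    fix m assume "m \<in> Suc ` V" thus "m \<in> {m\<in>{..<N}. \<not> h dvd m}"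
      unfolding V_def by (auto simp: dvd_eq_mod_eq_0)
  next
    fix m assume m: "m \<in> {m\<in>{..<N}. \<not> h dvd m}"
    hence "\<not> h dvd m" by simp
    hence "m \<noteq> 0" by (metis dvd_0_right)
    then obtain n where "m = Suc n" using not0_implies_Suc by blast
    thus "m \<in> Suc ` V" using m unfolding V_def by (auto simp: dvd_eq_mod_eq_0)
  qed
  have cV: "card V + c = N"
    using card_split[of N "\<lambda>n. h dvd n"] sucV card_image[of Suc V] unfolding c_def by simp
  have "H = {..<N - h}" unfolding H_def by auto
  hence cH: "card H = N - h" by simp
  have cl: "c = nat \<lceil>real N / real h\<rceil>" unfolding c_def using card_mult[OF h N] .
  have en: "energy v2 v3 r0 \<beta> S = - 1/2 * real (card Q) - \<beta> * real c"
    unfolding energy_def using pairs isub cb tb by simp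
  have "real (card V) = real N - real c" using cV by linarith
  moreover have "real (card H) \<ge> real N - real h" using cH by linarith
  moreover have "real (card V + card V + card H + card H) \<le> real (card Q)" using cQ by linarith
  ultimately have "energy v2 v3 r0 \<beta> S \<le> - 2 * real N + 1/2 * (2 * real h + 2 * (1 - \<beta>) * real c)"
    unfolding en by (simp add: algebra_simps)
  thus ?thesis using conf cl by blast
qed

theorem lemma4p1:
  fixes v2 v3 :: "real \<Rightarrow> real" and \<beta> \<epsilon> r0 :: real and N :: nat and C :: "complex set"
  assumes beta_pos: "\<beta> > 0" and eps_pos: "\<epsilon> > 0"
    and i2: "v2 1 = -1" "\<And>r. r \<ge> 0 \<Longrightarrow> r \<noteq> 1 \<Longrightarrow> v2 r > -1"
    and ii2: "1 < r0" "r0 < sqrt 2" "\<And>r. r \<ge> r0 \<Longrightarrow> v2 r = 0"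
    and iii2: "\<And>r. 0 \<le> r \<Longrightarrow> r \<le> 1 - \<epsilon> \<Longrightarrow> v2 r > 1 / \<epsilon>"
    and i3: "\<And>t. 0 < t \<Longrightarrow> t < 2 * pi \<Longrightarrow> v3 t = v3 (2 * pi - t)"
    and ii3: "v3 (pi / 2) = 0" "v3 pi = 0" "v3 (3 * pi / 2) = 0"
      "\<And>t. 0 \<le> t \<Longrightarrow> t < 2 * pi \<Longrightarrow> t \<notin> {pi / 2, pi, 3 * pi / 2} \<Longrightarrow> v3 t > 0"
    and iii3: "\<And>t. pi - \<epsilon> \<le> t \<Longrightarrow> t \<le> pi + \<epsilon> \<Longrightarrow>
                   v3 t \<ge> 4 / (pi / 10 - \<epsilon>) * \<bar>t - pi\<bar>"
      "\<And>t. pi - \<epsilon> \<le> t \<Longrightarrow> t \<le> pi + \<epsilon> \<Longrightarrow> t \<noteq> pi \<Longrightarrow>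
                   v3 t > 4 / (pi / 10 - \<epsilon>) * \<bar>t - pi\<bar>"
    and iv3: "\<And>t. 0 \<le> t \<Longrightarrow> t < 2 * pi \<Longrightarrow>
                 (\<forall>k\<in>{1, 2, 3 :: nat}. \<bar>t - real k * pi / 2\<bar> \<ge> \<epsilon>) \<Longrightarrow>
                 v3 t > max 1 (2 * \<beta>) * (4 / (1 - \<epsilon>)\<^sup>2) * (sqrt 2 + 1 / 2)\<^sup>2"
    and N_pos: "N \<ge> 1"
    and minimizer: "is_minimizer v2 v3 r0 \<beta> N C"
  shows "F_graph v2 v3 r0 \<beta> C (nat_edges r0 C) \<le> m_beta \<beta> N
         \<and> energy v2 v3 r0 \<beta> C \<le> - 2 * real N + 1 / 2 * m_beta \<beta> N"
  proof -
  define f where "f = (\<lambda>h::nat. 2 * real h + 2 * (1 - \<beta>) * real (nat \<lceil>real N / real h\<rceil>))"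
  have "m_beta \<beta> N = Min (f ` {1..N})" unfolding m_beta_def f_def by simp
  moreover have "Min (f ` {1..N}) \<in> f ` {1..N}" using N_pos by (intro Min_in) auto
  ultimately obtain h where h: "h \<in> {1..N}" and mh: "m_beta \<beta> N = f h" by auto
  have v2z: "\<And>r. r \<ge> r0 \<Longrightarrow> v2 r = 0" using ii2(3) .
  obtain S where S: "is_config N S"
    and eS: "energy v2 v3 r0 \<beta> S \<le> - 2 * real N + 1/2 * (2 * real h + 2 * (1 - \<beta>) * real (nat \<lceil>real N / real h\<rceil>))"
    using competitor[of h N v2 r0 v3 \<beta>] h N_pos i2(1) v2z ii2(1,2) ii3(1,2,3) by auto
  have confC: "is_config N C" and minC: "energy v2 v3 r0 \<beta> C \<le> energy v2 v3 r0 \<beta> S"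
    using minimizer S unfolding is_minimizer_def by auto
  have E: "energy v2 v3 r0 \<beta> C \<le> - 2 * real N + 1 / 2 * m_beta \<beta> N"
    unfolding mh f_def using order.trans[OF minC eS] .
  have finC: "finite C" and cC: "card C = N" using confC unfolding is_config_def by auto
  have "F_graph v2 v3 r0 \<beta> C (nat_edges r0 C) = 4 * real (card C) + 2 * energy v2 v3 r0 \<beta> C"
    using energy_identity[OF finC, of r0 v2] v2z by blast
  hence "F_graph v2 v3 r0 \<beta> C (nat_edges r0 C) \<le> m_beta \<beta> N" using E cC by linarith
  thus ?thesis using E by blast
qed

end
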